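(* For the MDP $\Lambda$, there exists an optimal policy $\phi^*$ that is a threshold-type age-dependent policy. That is, there exist $K\in\mathbb{N}^+$, a finite action order $(b_1,\dots,b_K)$ with $b_k\in\mathcal{A}$ and $b_k\neq b_{k+1}$ for $1\le k<K$, and thresholds $\theta_{b_k\to b_{k+1}}\in\mathbb{N}^+$, $1\le k<K$, with $\theta_{b_1\to b_2}\le\theta_{b_2\to b_3}\le\dots$, such that $\phi^*(s)=b_1$ for $s<\theta_{b_1\to b_2}$, $\phi^*(s)=b_k$ for $\theta_{b_{k-1}\to b_k}\le s<\theta_{b_k\to b_{k+1}}$ ($1<k<K$), and $\phi^*(s)=b_K$ for $s\ge\theta_{b_{K-1}\to b_K}$.
   Context: Fix $N\in\mathbb{N}^+$ vehicle types $\mathcal{N}=\{1,\dots,N\}$. Type $n$ has arrival probability $p_n\in(0,1]$, mean operational cost $c_n\ge 0$ and mean sensing capability $r_n\in(0,1]$. Fix constants $\beta\in(0,1)$ and $\epsilon>0$. The action set is $\mathcal{A}=2^{\mathcal{N}}$ (all subsets of $\mathcal{N}$, including $\emptyset$). For $a\in\mathcal{A}$ define the success probability $Q_\emptyset=0$ and $Q_a=1-\prod_{n\in a}(1-r_np_n)$ for $a\neq\emptyset$, and the expected recruitment cost $E_a=\sum_{n\in a}p_nc_n$ ($E_\emptyset=0$). For a state (age) $\delta\in\mathbb{N}^+$ define $G_a(\delta)=Q_a(\delta^2+2\delta)\epsilon-(1+\delta)^2\epsilon$ and the immediate cost $u(\delta,a)=(1-\beta)E_a-\beta G_a(\delta)$.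 The MDP $\Lambda$ has state space $\mathbb{N}^+$, action space $\mathcal{A}$, and transitions: from state $s$ under action $a$, go to state $1$ with probability $Q_a$ and to state $s+1$ with probability $1-Q_a$. For a policy $\phi$ the average cost is $V(\phi)=\limsup_{T\to\infty}\frac1T\mathbb{E}^\phi[\sum_{t=1}^T u(S(t),A(t))]$ with $S(1)=1$; a policy is optimal if it minimizes $V$ over all policies. A deterministic stationary policy is a map $\phi:\mathbb{N}^+\to\mathcal{A}$. *)

theory Defs
  imports "HOL-Probability.Probability"
begin

text \<open>Vehicle types are 1..N; an action is a subset of {1..N}.
  Parameters p, c, r are functions nat => real (only values on 1..N matter).\<close>

definition Qa :: "(nat \<Rightarrow> real) \<Rightarrow> (nat \<Rightarrow> real) \<Rightarrow> nat set \<Rightarrow> real" where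
  "Qa p r a = (if a = {} then 0 else 1 - (\<Prod>n\<in>a. 1 - r n * p n))"

definition Ea :: "(nat \<Rightarrow> real) \<Rightarrow> (nat \<Rightarrow> real) \<Rightarrow> nat set \<Rightarrow> real" where
  "Ea p c a = (\<Sum>n\<in>a. p n * c n)"

definition Ga :: "(nat \<Rightarrow> real) \<Rightarrow> (nat \<Rightarrow> real) \<Rightarrow> real \<Rightarrow> nat set \<Rightarrow> nat \<Rightarrow> real" where
  "Ga p r \<epsilon> a \<delta> = Qa p r a * ((real \<delta>)\<^sup>2 + 2 * real \<delta>) * \<epsilon> - (1 + real \<delta>)\<^sup>2 * \<epsilon>"

definition ucost :: "(nat \<Rightarrow> real) \<Rightarrow> (nat \<Rightarrow> real) \<Rightarrow> (nat \<Rightarrow> real) \<Rightarrow> real \<Rightarrow> real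
    \<Rightarrow> nat \<Rightarrow> nat set \<Rightarrow> real" where
  "ucost p c r \<beta> \<epsilon> \<delta> a = (1 - \<beta>) * Ea p c a - \<beta> * Ga p r \<epsilon> a \<delta>"

definition trans :: "(nat \<Rightarrow> real) \<Rightarrow> (nat \<Rightarrow> real) \<Rightarrow> nat \<Rightarrow> nat set \<Rightarrow> nat pmf" where
  "trans p r s a = map_pmf (\<lambda>b. if b then 1 else s + 1) (bernoulli_pmf (Qa p r a))"

text \<open>General (history-dependent, randomized) policies: given the past
  (state, action) pairs and the current state, a distribution over actions.\<close>
type_synonym policy = "(nat \<times> nat set) list \<Rightarrow> nat \<Rightarrow> nat set pmf"

definition valid_policy :: "nat \<Rightarrow> policy \<Rightarrow> bool" where
  "valid_policy N pol \<longleftrightarrow> (\<forall>h s. set_pmf (pol h s) \<subseteq> Pow {1..N})"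

text \<open>Distribution of (history, current state) at time k+1 (k steps done), S(1) = 1.\<close>
fun traj :: "(nat \<Rightarrow> real) \<Rightarrow> (nat \<Rightarrow> real) \<Rightarrow> policy \<Rightarrow> nat
    \<Rightarrow> ((nat \<times> nat set) list \<times> nat) pmf" where
  "traj p r pol 0 = return_pmf ([], 1)"
| "traj p r pol (Suc k) = bind_pmf (traj p r pol k) (\<lambda>(h, s).
      bind_pmf (pol h s) (\<lambda>a. map_pmf (\<lambda>s'. (h @ [(s, a)], s')) (trans p r s a)))"

definition exp_cost :: "(nat \<Rightarrow> real) \<Rightarrow> (nat \<Rightarrow> real) \<Rightarrow> (nat \<Rightarrow> real) \<Rightarrow> real \<Rightarrow> real
    \<Rightarrow> policy \<Rightarrow> nat \<Rightarrow> real" where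
  "exp_cost p c r \<beta> \<epsilon> pol k = measure_pmf.expectation (traj p r pol k)
      (\<lambda>(h, s). measure_pmf.expectation (pol h s) (\<lambda>a. ucost p c r \<beta> \<epsilon> s a))"

definition avg_cost :: "(nat \<Rightarrow> real) \<Rightarrow> (nat \<Rightarrow> real) \<Rightarrow> (nat \<Rightarrow> real) \<Rightarrow> real \<Rightarrow> real
    \<Rightarrow> policy \<Rightarrow> ereal" where
  "avg_cost p c r \<beta> \<epsilon> pol =
     limsup (\<lambda>T. ereal ((\<Sum>k<T. exp_cost p c r \<beta> \<epsilon> pol k) / real T))"

definition stationary :: "(nat \<Rightarrow> nat set) \<Rightarrow> policy" where
  "stationary \<phi> = (\<lambda>h s. return_pmf (\<phi> s))"

definition optimal :: "nat \<Rightarrow> (nat \<Rightarrow> real) \<Rightarrow> (nat \<Rightarrow> real) \<Rightarrow> (nat \<Rightarrow> real) \<Rightarrow> real \<Rightarrow> real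
    \<Rightarrow> policy \<Rightarrow> bool" where
  "optimal N p c r \<beta> \<epsilon> pol \<longleftrightarrow> valid_policy N pol \<and>
     (\<forall>pol'. valid_policy N pol' \<longrightarrow> avg_cost p c r \<beta> \<epsilon> pol \<le> avg_cost p c r \<beta> \<epsilon> pol')"

end

theory Submission
  imports Defs
begin

lemma exp_fin_sum:
  fixes f :: "'a \<Rightarrow> real"
  assumes "finite (set_pmf M)"
  shows "measure_pmf.expectation M f = (\<Sum>x\<in>set_pmf M. f x * pmf M x)"
  by (rule integral_measure_pmf_real) (use assms in \<open>auto simp: set_pmf_iff\<close>)

lemma integral_bind_pmf_fin:
  fixes f :: "'b \<Rightarrow> real"
  assumes fM: "finite (set_pmf M)" and fF: "\<And>x. x \<in> set_pmf M \<Longrightarrow> finite (set_pmf (F x))"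
  shows "measure_pmf.expectation (bind_pmf M F) f
       = measure_pmf.expectation M (\<lambda>x. measure_pmf.expectation (F x) f)"
proof -
  define S where "S = (\<Union>x\<in>set_pmf M. set_pmf (F x))"
  have fS: "finite S" unfolding S_def using fM fF by (intro finite_UN_I) auto
  have "measure_pmf.expectation (bind_pmf M F) f = (\<Sum>y\<in>S. f y * pmf (bind_pmf M F) y)"
    by (rule integral_measure_pmf_real[OF fS]) (auto simp: S_def)
  also have "\<dots> = (\<Sum>y\<in>S. f y * (\<Sum>x\<in>set_pmf M. pmf (F x) y * pmf M x))"
    by (intro sum.cong refl arg_cong2[where f="(*)"]) (simp add: pmf_bind exp_fin_sum[OF fM])
  also have "\<dots> = (\<Sum>x\<in>set_pmf M. (\<Sum>y\<in>S. f y * pmf (F x) y) * pmf M x)"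
    by (simp add: sum_distrib_left sum_distrib_right sum.swap[of _ S] mult_ac)
  also have "\<dots> = (\<Sum>x\<in>set_pmf M. measure_pmf.expectation (F x) f * pmf M x)"
  proof (intro sum.cong refl arg_cong2[where f="(*)"])
    fix x assume x: "x \<in> set_pmf M"
    show "(\<Sum>y\<in>S. f y * pmf (F x) y) = measure_pmf.expectation (F x) f"
      by (rule integral_measure_pmf_real[OF fS, symmetric]) (use x in \<open>auto simp: S_def\<close>)
  qed
  also have "\<dots> = measure_pmf.expectation M (\<lambda>x. measure_pmf.expectation (F x) f)"
    by (simp add: exp_fin_sum[OF fM])
  finally show ?thesis .
qed

lemma exp_mono_fin:
  fixes f g :: "'a \<Rightarrow> real"
  assumes "finite (set_pmf M)" "\<And>x. x \<in> set_pmf M \<Longrightarrow> f x \<le> g x"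
  shows "measure_pmf.expectation M f \<le> measure_pmf.expectation M g"
  using assms by (simp add: exp_fin_sum sum_mono mult_right_mono)

lemma exp_cong_fin:
  fixes f g :: "'a \<Rightarrow> real"
  assumes "\<And>x. x \<in> set_pmf M \<Longrightarrow> f x = g x"
  shows "measure_pmf.expectation M f = measure_pmf.expectation M g"
  using assms by (intro integral_cong_AE) (auto simp: AE_measure_pmf_iff)

lemma exp_add_fin:
  fixes f g :: "'a \<Rightarrow> real"
  assumes "finite (set_pmf M)"
  shows "measure_pmf.expectation M (\<lambda>x. f x + g x) = measure_pmf.expectation M f + measure_pmf.expectation M g"
  using assms by (simp add: exp_fin_sum sum.distrib distrib_right)

lemma exp_diff_fin:
  fixes f g :: "'a \<Rightarrow> real"
  assumes "finite (set_pmf M)"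
  shows "measure_pmf.expectation M (\<lambda>x. f x - g x) = measure_pmf.expectation M f - measure_pmf.expectation M g"
  using assms by (simp add: exp_fin_sum sum_subtractf left_diff_distrib)

lemma exp_const:
  "measure_pmf.expectation M (\<lambda>x. (c::real)) = c"
  by simp

lemma exp_cmult_fin:
  fixes f :: "'a \<Rightarrow> real"
  assumes "finite (set_pmf M)"
  shows "measure_pmf.expectation M (\<lambda>x. k * f x) = k * measure_pmf.expectation M f"
  using assms by (simp add: exp_fin_sum sum_distrib_left mult_ac)

locale mdp =
  fixes N :: nat and p c r :: "nat \<Rightarrow> real" and \<beta> \<epsilon> :: real
  assumes N1: "N \<ge> 1"
    and pp: "\<forall>n\<in>{1..N}. 0 < p n \<and> p n \<le> 1"
    and cc: "\<forall>n\<in>{1..N}. c n \<ge> 0"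
    and rr: "\<forall>n\<in>{1..N}. 0 < r n \<and> r n \<le> 1"
    and b0: "0 < \<beta>" and b1: "\<beta> < 1" and e0: "\<epsilon> > 0"
begin

abbreviation "Q \<equiv> Qa p r"
abbreviation "u \<equiv> ucost p c r \<beta> \<epsilon>"
abbreviation "A \<equiv> Pow {1..N}"

lemma Q_bounds: assumes "a \<subseteq> {1..N}" shows "0 \<le> Q a" "Q a \<le> 1"
proof -
  have f: "\<And>n. n \<in> a \<Longrightarrow> 0 \<le> 1 - r n * p n \<and> 1 - r n * p n \<le> 1"
  proof -
    fix n assume "n \<in> a" then have "n \<in> {1..N}" using assms by auto
    then have "0 < r n" "r n \<le> 1" "0 < p n" "p n \<le> 1" using pp rr by auto
    then have "0 < r n * p n" "r n * p n \<le> 1" by (auto simp: mult_le_one)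
    then show "0 \<le> 1 - r n * p n \<and> 1 - r n * p n \<le> 1" by auto
  qed
  have "0 \<le> (\<Prod>n\<in>a. 1 - r n * p n)" by (rule prod_nonneg) (use f in auto)
  moreover have "(\<Prod>n\<in>a. 1 - r n * p n) \<le> 1" by (rule prod_le_1) (use f in auto)
  ultimately show "0 \<le> Q a" "Q a \<le> 1" by (auto simp: Qa_def)
qed

lemma E_nonneg: assumes "a \<subseteq> {1..N}" shows "0 \<le> Ea p c a"
  unfolding Ea_def
proof (rule sum_nonneg)
  fix n assume "n \<in> a" then have "n \<in> {1..N}" using assms by auto
  then have "0 < p n" "0 \<le> c n" using pp cc by auto
  then show "0 \<le> p n * c n" by simp
qed

lemma set_trans: "set_pmf (trans p r s a) \<subseteq> {1, s + 1}"
  by (auto simp: trans_def)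

lemma exp_trans: assumes "a \<subseteq> {1..N}"
  shows "measure_pmf.expectation (trans p r s a) F = Q a * F 1 + (1 - Q a) * F (s + 1)"
  using Q_bounds[OF assms] by (simp add: trans_def mult_ac)

lemma traj_props:
  assumes "valid_policy N pol"
  shows "finite (set_pmf (traj p r pol k)) \<and> (\<forall>x\<in>set_pmf (traj p r pol k). snd x \<ge> 1)"
proof (induction k)
  case 0 then show ?case by simp
next
  case (Suc k)
  have fa: "\<And>h s. finite (set_pmf (pol h s))"
    using assms unfolding valid_policy_def by (meson finite_Pow_iff finite_atLeastAtMost finite_subset)
  have ft: "\<And>s a. finite (set_pmf (trans p r s a))"
    using set_trans by (meson finite.emptyI finite.insertI finite_subset)
  show ?case
    using Suc fa ft set_trans
    by (auto simp: split_beta intro!: finite_UN_I) (fastforce)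
qed

end

context mdp begin

lemma fin_pol: "valid_policy N pol \<Longrightarrow> finite (set_pmf (pol h s))"
  unfolding valid_policy_def by (meson finite_Pow_iff finite_atLeastAtMost finite_subset)

lemma pol_A: "valid_policy N pol \<Longrightarrow> a \<in> set_pmf (pol h s) \<Longrightarrow> a \<subseteq> {1..N}"
  unfolding valid_policy_def by blast

lemma fin_trans: "finite (set_pmf (trans p r s a))"
  using set_trans by (meson finite.emptyI finite.insertI finite_subset)

lemma step:
  assumes v: "valid_policy N pol"
  shows "measure_pmf.expectation (traj p r pol (Suc k)) (\<lambda>x. F (snd x))
    = measure_pmf.expectation (traj p r pol k) (\<lambda>x. measure_pmf.expectation (pol (fst x) (snd x))
         (\<lambda>a. Q a * F 1 + (1 - Q a) * F (snd x + 1)))"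
proof -
  have f1: "finite (set_pmf (traj p r pol k))" using traj_props[OF v] by blast
  have f2: "\<And>x. finite (set_pmf ((\<lambda>(h, s). bind_pmf (pol h s) (\<lambda>a. map_pmf (\<lambda>s'. (h @ [(s, a)], s')) (trans p r s a))) x))"
    using fin_pol[OF v] fin_trans by (auto simp: split_beta intro!: finite_UN_I)
  show ?thesis
    apply (simp only: traj.simps)
    apply (subst integral_bind_pmf_fin[OF f1 f2])
    apply (rule exp_cong_fin)
    apply (simp add: split_beta)
    apply (subst integral_bind_pmf_fin[OF fin_pol[OF v]])
     apply (simp add: fin_trans)
    apply (rule exp_cong_fin)
    apply (simp add: exp_trans[OF pol_A[OF v]])
    done
qed

definition lam where "lam = \<beta> * \<epsilon>"
definition Cc where "Cc a = (1 - \<beta>) * Ea p c a + lam"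

lemma lam_pos: "lam > 0" using b0 e0 by (simp add: lam_def)

lemma u_eq1: "u s a = (1 - \<beta>) * Ea p c a + lam * (Q a + (1 - Q a) * (real s + 1)^2)"
  by (simp add: ucost_def Ga_def lam_def power2_eq_square algebra_simps)

lemma u_eq2: "u s a = Cc a + lam * (1 - Q a) * (real s ^ 2 + 2 * real s)"
  by (simp add: ucost_def Ga_def lam_def Cc_def power2_eq_square algebra_simps)

lemma u_lower: assumes "a \<subseteq> {1..N}"
  shows "lam * (Q a + (1 - Q a) * (real s + 1)^2) \<le> u s a"
proof -
  have "0 \<le> (1 - \<beta>) * Ea p c a" using E_nonneg[OF assms] b1 by simp
  then show ?thesis by (simp add: u_eq1)
qed

lemma u_nonneg: assumes "a \<subseteq> {1..N}" shows "0 \<le> u s a"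
proof -
  have "0 \<le> lam * (Q a + (1 - Q a) * (real s + 1)^2)"
    using Q_bounds[OF assms] lam_pos by (intro mult_nonneg_nonneg add_nonneg_nonneg) auto
  then show ?thesis using u_lower[OF assms, of s] by linarith
qed

lemma exp_cost_nonneg: assumes v: "valid_policy N pol"
  shows "0 \<le> exp_cost p c r \<beta> \<epsilon> pol k"
  unfolding exp_cost_def
  by (rule integral_nonneg_AE) (auto simp: AE_measure_pmf_iff split_beta
        intro!: integral_nonneg_AE u_nonneg pol_A[OF v])

end

lemma min_shift_le:
  fixes F F' :: "'a \<Rightarrow> real"
  assumes "finite S" "S \<noteq> {}" "\<And>a. a \<in> S \<Longrightarrow> F' a \<le> F a - d"
  shows "Min (F' ` S) \<le> Min (F ` S) - d"
proof -
  have "Min (F ` S) \<in> F ` S" using assms by (intro Min_in) auto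
  then obtain a where a: "a \<in> S" "Min (F ` S) = F a" by auto
  have "Min (F' ` S) \<le> F' a" using assms a by auto
  then show ?thesis using assms(3)[OF a(1)] a by linarith
qed

lemma min_shift_ge:
  fixes F F' :: "'a \<Rightarrow> real"
  assumes "finite S" "S \<noteq> {}" "\<And>a. a \<in> S \<Longrightarrow> F a - d \<le> F' a"
  shows "Min (F ` S) - d \<le> Min (F' ` S)"
proof -
  have "Min (F' ` S) \<in> F' ` S" using assms by (intro Min_in) auto
  then obtain a where a: "a \<in> S" "Min (F' ` S) = F' a" by auto
  have "Min (F ` S) \<le> F a" using assms a by auto
  then show ?thesis using assms(3)[OF a(1)] a by linarith
qed

context mdp begin

lemma A_fin: "finite A" by simp
lemma A_ne: "A \<noteq> {}" by auto

definition q where "q = Max (Q ` A)"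

lemma q_ge: "a \<in> A \<Longrightarrow> Q a \<le> q"
  unfolding q_def by (intro Max_ge) auto

lemma q_in: "q \<in> Q ` A"
  unfolding q_def by (intro Max_in) auto

lemma q_pos: "0 < q"
proof -
  have "{1} \<in> A" using N1 by auto
  moreover have "Q {1} = r 1 * p 1" by (simp add: Qa_def)
  moreover have "0 < r 1 * p 1" using pp rr N1 by auto
  ultimately show ?thesis using q_ge[of "{1}"] by linarith
qed

lemma q_le1: "q \<le> 1"
  using q_in Q_bounds by auto

lemma d_le_dq: assumes "0 \<le> d" shows "d \<le> d / q"
proof -
  have "d * q \<le> d" using mult_left_le[OF q_le1 assms] .
  then show ?thesis using q_pos by (simp add: le_divide_eq)
qed

definition Sq where "Sq = {a \<in> A. Q a = q}"
definition astar where "astar = (SOME a. a \<in> Sq \<and> (\<forall>b\<in>Sq. Cc a \<le> Cc b))"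

lemma astar_props: "astar \<in> A" "Q astar = q" "\<And>b. b \<in> A \<Longrightarrow> Q b = q \<Longrightarrow> Cc astar \<le> Cc b"
proof -
  have fin: "finite (Cc ` Sq)" by (simp add: Sq_def)
  have ne: "Sq \<noteq> {}" using q_in by (auto simp: Sq_def)
  have "Min (Cc ` Sq) \<in> Cc ` Sq" using fin ne by (intro Min_in) auto
  then obtain a where a: "a \<in> Sq" "Cc a = Min (Cc ` Sq)" by auto
  have "a \<in> Sq \<and> (\<forall>b\<in>Sq. Cc a \<le> Cc b)" using a fin by auto
  then have "astar \<in> Sq \<and> (\<forall>b\<in>Sq. Cc astar \<le> Cc b)"
    unfolding astar_def by (rule someI)
  then show "astar \<in> A" "Q astar = q" "\<And>b. b \<in> A \<Longrightarrow> Q b = q \<Longrightarrow> Cc astar \<le> Cc b"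
    by (auto simp: Sq_def)
qed

definition alpha where "alpha = lam * (1 - q) / q"
definition bet where "bet = 2 * lam * (1 - q) / q^2"
definition gam where "gam g = (Cc astar - g + (1 - q) * (alpha + bet)) / q"
definition Quad where "Quad g s = alpha * real s ^ 2 + bet * real s + gam g"

lemma alpha_nn: "0 \<le> alpha" using q_pos q_le1 lam_pos by (simp add: alpha_def)
lemma bet_nn: "0 \<le> bet" using q_pos q_le1 lam_pos by (simp add: bet_def)

lemma Quad_rec: "Quad g s = u s astar - g + (1 - q) * Quad g (s + 1)"
proof -
  have q0: "q \<noteq> 0" using q_pos by simp
  show ?thesis
    unfolding u_eq2 astar_props(2) Quad_def gam_def alpha_def bet_def
    using q0 by (simp add: field_simps power2_eq_square)
qed

lemma gam_shift: "gam g' = gam g - (g' - g) / q"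
proof -
  have "gam g - (g' - g) / q = ((Cc astar - g + (1 - q) * (alpha + bet)) - (g' - g)) / q"
    unfolding gam_def by (rule diff_divide_distrib[symmetric])
  then show ?thesis unfolding gam_def by simp
qed

lemma Quad_ge: "gam g \<le> Quad g s"
  using alpha_nn bet_nn by (simp add: Quad_def)

definition G where "G = Cc astar + alpha + bet"
definition D where "D = (\<Sum>a\<in>A. \<bar>Cc astar - Cc a\<bar> / \<bar>q - Q a\<bar>)"
definition M where "M = nat \<lceil>(D + \<bar>Cc astar - G\<bar> / q) / lam\<rceil> + 2"

lemma M_ge: "M \<ge> 2" by (simp add: M_def)

lemma M_big: "D + \<bar>Cc astar - G\<bar> / q \<le> lam * real M"
proof -
  have "(D + \<bar>Cc astar - G\<bar> / q) / lam \<le> real M"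
    unfolding M_def by linarith
  then show ?thesis using lam_pos by (simp add: field_simps)
qed

primrec V :: "real \<Rightarrow> nat \<Rightarrow> real" where
  "V g 0 = Quad g M"
| "V g (Suc k) = Min ((\<lambda>a. u (M - Suc k) a - g + (1 - Q a) * V g k) ` A)"

definition hh where "hh g s = (if M \<le> s then Quad g s else V g (M - s))"

lemma hh_rec: assumes "s < M"
  shows "hh g s = Min ((\<lambda>a. u s a - g + (1 - Q a) * hh g (s + 1)) ` A)"
proof -
  have e: "M - s = Suc (M - Suc s)" using assms by simp
  have "hh g (s + 1) = V g (M - Suc s)"
    using assms by (cases "s + 1 = M") (auto simp: hh_def)
  moreover have "M - Suc (M - Suc s) = s" using assms by simp
  ultimately show ?thesis using assms by (simp add: hh_def e)
qed

lemma hh_ge_M: "M \<le> s \<Longrightarrow> hh g s = Quad g s" by (simp add: hh_def)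

lemma V_lip:
  assumes "g \<le> g'"
  shows "V g k - (1 / q + real k) * (g' - g) \<le> V g' k \<and> V g' k \<le> V g k - (g' - g)"
proof (induction k)
  case 0
  have q1: "1 \<le> 1 / q" using q_pos q_le1 by simp
  have e: "Quad g' M = Quad g M - (g' - g) / q" by (simp add: Quad_def gam_shift)
  have "(g' - g) \<le> (g' - g) / q" using assms by (intro d_le_dq) simp
  then show ?case using e by (simp add: divide_inverse)
next
  case (Suc k)
  let ?d = "g' - g"
  have d: "0 \<le> ?d" using assms by simp
  have IH1: "V g k - (1 / q + real k) * ?d \<le> V g' k" and IH2: "V g' k \<le> V g k - ?d" using Suc by auto
  have up: "u (M - Suc k) a - g' + (1 - Q a) * V g' k \<le> (u (M - Suc k) a - g + (1 - Q a) * V g k) - ?d"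
    if "a \<in> A" for a
  proof -
    have "0 \<le> 1 - Q a" using Q_bounds that by auto
    then have "(1 - Q a) * V g' k \<le> (1 - Q a) * V g k"
      using IH2 d by (intro mult_left_mono) auto
    then show ?thesis by linarith
  qed
  have lo: "(u (M - Suc k) a - g + (1 - Q a) * V g k) - (1 / q + real (Suc k)) * ?d \<le> u (M - Suc k) a - g' + (1 - Q a) * V g' k"
    if "a \<in> A" for a
  proof -
    have b: "0 \<le> 1 - Q a" "1 - Q a \<le> 1" using Q_bounds that by auto
    have "(1 - Q a) * (V g' k - V g k) \<ge> (1 - Q a) * (- ((1 / q + real k) * ?d))"
      using IH1 b by (intro mult_left_mono) auto
    moreover have "(1 - Q a) * (- ((1 / q + real k) * ?d)) \<ge> - ((1 / q + real k) * ?d)"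
    proof -
      have "0 \<le> (1 / q + real k) * ?d" using q_pos d by simp
      then show ?thesis using b by (simp add: mult_left_le_one_le)
    qed
    ultimately show ?thesis by (simp add: algebra_simps)
  qed
  show ?case
    using min_shift_le[OF A_fin A_ne up] min_shift_ge[OF A_fin A_ne lo] by simp
qed

lemma hh_lip:
  assumes "g \<le> g'"
  shows "hh g s - (1 / q + real M) * (g' - g) \<le> hh g' s \<and> hh g' s \<le> hh g s - (g' - g)"
proof (cases "M \<le> s")
  case True
  have q1: "1 \<le> 1 / q" using q_pos q_le1 by simp
  have e: "Quad g' s = Quad g s - (g' - g) / q" by (simp add: Quad_def gam_shift)
  have "(g' - g) \<le> (g' - g) / q" using assms by (intro d_le_dq) simp
  moreover have "(g' - g) / q \<le> (1 / q + real M) * (g' - g)" using assms q_pos by (simp add: field_simps mult_right_mono)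
  ultimately show ?thesis using e True by (simp add: hh_def)
next
  case False
  have "(1 / q + real (M - s)) * (g' - g) \<le> (1 / q + real M) * (g' - g)"
    using assms by (intro mult_right_mono) auto
  then show ?thesis using V_lip[OF assms, of "M - s"] False by (simp add: hh_def)
qed

end

context mdp begin

lemma hh_cont: "continuous_on S (\<lambda>g. hh g s)"
proof (rule lipschitz_on_continuous_on)
  show "(1 / q + real M)-lipschitz_on S (\<lambda>g. hh g s)"
  proof (rule lipschitz_onI)
    fix x y
    show "dist (hh x s) (hh y s) \<le> (1 / q + real M) * dist x y"
    proof (cases "x \<le> y")
      case True
      then show ?thesis using hh_lip[OF True, of s] q_pos
        by (auto simp: dist_real_def abs_if)
    next
      case False
      then have "y \<le> x" by simp
      then show ?thesis using hh_lip[OF \<open>y \<le> x\<close>, of s] q_pos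
        by (auto simp: dist_real_def abs_if)
    qed
  next
    show "0 \<le> 1 / q + real M" using q_pos by simp
  qed
qed

lemma ex_root: "\<exists>g. hh g 1 = 0"
proof -
  define v where "v = hh 0 1"
  show ?thesis
  proof (cases "0 \<le> v")
    case True
    have "hh v 1 \<le> hh 0 1 - v" using hh_lip[OF True, of 1] by simp
    then have "hh v 1 \<le> 0" by (simp add: v_def)
    moreover have "0 \<le> hh 0 1" using True by (simp add: v_def)
    ultimately obtain x where "0 \<le> x" "x \<le> v" "hh x 1 = 0"
      using IVT2'[of "\<lambda>g. hh g 1" v 0 0, OF _ _ True hh_cont] by blast
    then show ?thesis by blast
  next
    case False
    then have "v \<le> 0" by simp
    have "hh 0 1 \<le> hh v 1 - (0 - v)" using hh_lip[OF \<open>v \<le> 0\<close>, of 1] by simp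
    then have "0 \<le> hh v 1" by (simp add: v_def)
    moreover have "hh 0 1 \<le> 0" using False by (simp add: v_def)
    ultimately obtain x where "v \<le> x" "x \<le> 0" "hh x 1 = 0"
      using IVT2'[of "\<lambda>g. hh g 1" 0 0 v, OF _ _ \<open>v \<le> 0\<close> hh_cont] by blast
    then show ?thesis by blast
  qed
qed

definition gs where "gs = (SOME g. hh g 1 = 0)"

lemma gs_root: "hh gs 1 = 0"
  unfolding gs_def using ex_root by (rule someI_ex)

lemma hh_le_Quad: "hh g s \<le> Quad g s"
proof (induction "M - s" arbitrary: s)
  case 0 then show ?case by (simp add: hh_def)
next
  case (Suc k)
  then have sM: "s < M" by simp
  have IH: "hh g (s + 1) \<le> Quad g (s + 1)" using Suc by simp
  have "hh g s \<le> u s astar - g + (1 - Q astar) * hh g (s + 1)"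
    unfolding hh_rec[OF sM] using astar_props(1) by (intro Min_le) auto
  also have "\<dots> \<le> u s astar - g + (1 - q) * Quad g (s + 1)"
    using IH q_le1 astar_props(2) by (simp add: mult_left_mono)
  also have "\<dots> = Quad g s" by (rule Quad_rec[symmetric])
  finally show ?case .
qed

lemma gs_le_G: "gs \<le> G"
proof -
  have "0 \<le> Quad gs 1" using hh_le_Quad[of gs 1] gs_root by simp
  then have "0 \<le> alpha + bet + gam gs" by (simp add: Quad_def)
  then have "0 \<le> q * (alpha + bet) + (Cc astar - gs + (1 - q) * (alpha + bet))"
    using q_pos by (simp add: gam_def field_simps)
  then show ?thesis by (simp add: G_def algebra_simps)
qed

lemma bellman:
  assumes a: "a \<in> A"
  shows "gs + hh gs s \<le> u s a + (1 - Q a) * hh gs (s + 1)"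
proof (cases "s < M")
  case True
  have "hh gs s \<le> u s a - gs + (1 - Q a) * hh gs (s + 1)"
    unfolding hh_rec[OF True] using a by (intro Min_le) auto
  then show ?thesis by simp
next
  case False
  then have sM: "M \<le> s" by simp
  define X where "X = Quad gs (s + 1)"
  define f where "f = real s ^ 2 + 2 * real s"
  have hs: "hh gs s = u s astar - gs + (1 - q) * X"
    unfolding hh_ge_M[OF sM] X_def by (rule Quad_rec)
  have hs1: "hh gs (s + 1) = X" using sM by (simp add: hh_def X_def)
  have key: "Cc astar - Cc a \<le> (q - Q a) * (lam * f + X)"
  proof (cases "Q a = q")
    case True
    then show ?thesis using astar_props(3)[OF a] by simp
  next
    case False
    then have lt: "Q a < q" using q_ge[OF a] by simp
    have "\<bar>Cc astar - Cc a\<bar> / \<bar>q - Q a\<bar> \<le> D"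
      unfolding D_def by (rule member_le_sum) (use a in auto)
    then have r1: "(Cc astar - Cc a) / (q - Q a) \<le> D" using lt
      by (smt (verit) divide_right_mono)
    have "0 \<le> (1 - q) * (alpha + bet)" using q_le1 alpha_nn bet_nn by simp
    then have "Cc astar - G \<le> Cc astar - gs + (1 - q) * (alpha + bet)" using gs_le_G by linarith
    then have "gam gs \<ge> (Cc astar - G) / q"
      unfolding gam_def using q_pos by (intro divide_right_mono) auto
    moreover have "(Cc astar - G) / q \<ge> - (\<bar>Cc astar - G\<bar> / q)"
    proof -
      have "- \<bar>Cc astar - G\<bar> \<le> Cc astar - G" by simp
      then have "(- \<bar>Cc astar - G\<bar>) / q \<le> (Cc astar - G) / q" using q_pos by (intro divide_right_mono) auto
      then show ?thesis by simp
    qed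
    ultimately have "gam gs \<ge> - (\<bar>Cc astar - G\<bar> / q)" by linarith
    then have X_ge: "X \<ge> - (\<bar>Cc astar - G\<bar> / q)" using Quad_ge[of gs "s + 1"] by (simp add: X_def)
    have "real M \<le> real s" using sM by simp
    moreover have "0 \<le> real s * real s" by simp
    ultimately have "real M \<le> f" unfolding f_def power2_eq_square by linarith
    then have "lam * real M \<le> lam * f" using lam_pos by simp
    then have "D \<le> lam * f + X" using M_big X_ge by linarith
    then have "(Cc astar - Cc a) / (q - Q a) \<le> lam * f + X" using r1 by linarith
    then show ?thesis using lt by (simp add: divide_le_eq mult.commute)
  qed
  have "u s astar + (1 - q) * X \<le> u s a + (1 - Q a) * X"
    using key astar_props(2) unfolding u_eq2 f_def by (simp add: algebra_simps)
  then show ?thesis using hs hs1 by simp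
qed

definition phi where
  "phi s = (if M \<le> s then astar else (SOME a. a \<in> A \<and> hh gs s = u s a - gs + (1 - Q a) * hh gs (s + 1)))"

lemma phi_props: "phi s \<in> A \<and> gs + hh gs s = u s (phi s) + (1 - Q (phi s)) * hh gs (s + 1)"
proof (cases "M \<le> s")
  case True
  have "hh gs s = u s astar - gs + (1 - Q astar) * hh gs (s + 1)"
  proof -
    have "hh gs (s + 1) = Quad gs (s + 1)" using True by (simp add: hh_def)
    then show ?thesis unfolding hh_ge_M[OF True] astar_props(2) by (simp add: Quad_rec[of gs s])
  qed
  then show ?thesis using True astar_props by (simp add: phi_def)
next
  case False
  then have sM: "s < M" by simp
  let ?F = "\<lambda>a. u s a - gs + (1 - Q a) * hh gs (s + 1)"
  have "Min (?F ` A) \<in> ?F ` A" by (intro Min_in) auto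
  then have ex: "\<exists>a. a \<in> A \<and> hh gs s = ?F a" using hh_rec[OF sM] by auto
  let ?a = "SOME a. a \<in> A \<and> hh gs s = ?F a"
  have "?a \<in> A \<and> hh gs s = ?F ?a" by (rule someI_ex[OF ex])
  moreover have "phi s = ?a" using False by (simp add: phi_def)
  ultimately have "phi s \<in> A \<and> hh gs s = ?F (phi s)" by simp
  then show ?thesis by simp
qed

definition Hlow where "Hlow = min (gam gs) (Min (hh gs ` {..M}))"

lemma hh_low: "Hlow \<le> hh gs s"
proof (cases "M \<le> s")
  case True
  then show ?thesis using Quad_ge[of gs s] by (simp add: Hlow_def hh_def)
next
  case False
  then have "Min (hh gs ` {..M}) \<le> hh gs s" by (intro Min_le) auto
  then show ?thesis by (simp add: Hlow_def)
qed

definition Bq where "Bq = alpha + bet + \<bar>gam gs\<bar>"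

lemma Bq_nn: "0 \<le> Bq" using alpha_nn bet_nn by (simp add: Bq_def)

lemma hh_up: assumes "1 \<le> s" shows "hh gs s \<le> Bq * (real s)^2"
proof -
  have s1: "1 \<le> real s" using assms by simp
  have "real s \<le> (real s)^2" using s1 by (simp add: power2_eq_square)
  moreover have "1 \<le> (real s)^2" using s1 by (simp add: one_le_power)
  ultimately have "bet * real s \<le> bet * (real s)^2" "gam gs \<le> \<bar>gam gs\<bar> * (real s)^2"
    using bet_nn by (auto intro: mult_left_mono order_trans[of _ "\<bar>gam gs\<bar>"] mult_left_mono[of 1 _ "\<bar>gam gs\<bar>", simplified])
  then have "Quad gs s \<le> Bq * (real s)^2" by (simp add: Quad_def Bq_def algebra_simps)
  then show ?thesis using hh_le_Quad[of gs s] by linarith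
qed

end

lemma exp_return: "measure_pmf.expectation (return_pmf x) (f :: 'a \<Rightarrow> real) = f x"
  by (subst exp_fin_sum) auto

context mdp begin

definition ek where "ek pol k = measure_pmf.expectation (traj p r pol k) (\<lambda>x. hh gs (snd x))"
abbreviation ck where "ck pol k \<equiv> exp_cost p c r \<beta> \<epsilon> pol k"

lemma ck_eq: "ck pol k = measure_pmf.expectation (traj p r pol k)
   (\<lambda>x. measure_pmf.expectation (pol (fst x) (snd x)) (\<lambda>a. u (snd x) a))"
  unfolding exp_cost_def by (simp add: case_prod_unfold)

lemma ek0: "ek pol 0 = 0" using gs_root by (simp add: ek_def exp_return)

lemma ek_step:
  assumes v: "valid_policy N pol"
  shows "gs + ek pol k - ck pol k \<le> ek pol (Suc k)"
proof -
  have f1: "finite (set_pmf (traj p r pol k))" using traj_props[OF v] by blast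
  have inner: "gs + hh gs (snd x) - measure_pmf.expectation (pol (fst x) (snd x)) (\<lambda>a. u (snd x) a)
     \<le> measure_pmf.expectation (pol (fst x) (snd x)) (\<lambda>a. Q a * hh gs 1 + (1 - Q a) * hh gs (snd x + 1))" for x
  proof -
    let ?P = "pol (fst x) (snd x)"
    have fP: "finite (set_pmf ?P)" by (rule fin_pol[OF v])
    have "gs + hh gs (snd x) - measure_pmf.expectation ?P (\<lambda>a. u (snd x) a)
       = measure_pmf.expectation ?P (\<lambda>a. (gs + hh gs (snd x)) - u (snd x) a)"
      by (simp add: exp_diff_fin[OF fP])
    also have "\<dots> \<le> measure_pmf.expectation ?P (\<lambda>a. Q a * hh gs 1 + (1 - Q a) * hh gs (snd x + 1))"
    proof (rule exp_mono_fin[OF fP])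
      fix a assume "a \<in> set_pmf ?P"
      then have "a \<in> A" using pol_A[OF v] by blast
      then show "gs + hh gs (snd x) - u (snd x) a \<le> Q a * hh gs 1 + (1 - Q a) * hh gs (snd x + 1)"
        using bellman[of a "snd x"] gs_root by simp
    qed
    finally show ?thesis .
  qed
  have "gs + ek pol k - ck pol k = measure_pmf.expectation (traj p r pol k)
     (\<lambda>x. gs + hh gs (snd x) - measure_pmf.expectation (pol (fst x) (snd x)) (\<lambda>a. u (snd x) a))"
    unfolding ek_def ck_eq by (simp add: exp_diff_fin[OF f1] exp_add_fin[OF f1])
  also have "\<dots> \<le> ek pol (Suc k)"
    unfolding ek_def step[OF v] by (rule exp_mono_fin[OF f1 inner])
  finally show ?thesis .
qed

lemma exp_div_fin:
  fixes f :: "'a \<Rightarrow> real"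
  assumes "finite (set_pmf Mp)"
  shows "measure_pmf.expectation Mp (\<lambda>x. f x / k) = measure_pmf.expectation Mp f / k"
  using assms by (simp add: exp_fin_sum sum_divide_distrib)

lemma ek_up:
  assumes v: "valid_policy N pol"
  shows "ek pol (Suc k) \<le> Bq * (ck pol k / lam)"
proof -
  have f1: "finite (set_pmf (traj p r pol k))" using traj_props[OF v] by blast
  have f2: "finite (set_pmf (traj p r pol (Suc k)))" using traj_props[OF v] by blast
  have sq: "measure_pmf.expectation (traj p r pol (Suc k)) (\<lambda>x. (real (snd x))^2) \<le> ck pol k / lam"
  proof -
    have "measure_pmf.expectation (traj p r pol (Suc k)) (\<lambda>x. (real (snd x))^2)
     = measure_pmf.expectation (traj p r pol k) (\<lambda>x. measure_pmf.expectation (pol (fst x) (snd x))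
         (\<lambda>a. Q a * (real 1)^2 + (1 - Q a) * (real (snd x + 1))^2))"
      by (rule step[OF v])
    also have "\<dots> \<le> measure_pmf.expectation (traj p r pol k) (\<lambda>x. measure_pmf.expectation (pol (fst x) (snd x))
         (\<lambda>a. u (snd x) a / lam))"
    proof (rule exp_mono_fin[OF f1], rule exp_mono_fin[OF fin_pol[OF v]])
      fix x a assume "a \<in> set_pmf (pol (fst x) (snd x))"
      then have "a \<subseteq> {1..N}" using pol_A[OF v] by blast
      from u_lower[OF this, of "snd x"]
      have "(Q a + (1 - Q a) * (real (snd x) + 1)^2) * lam \<le> u (snd x) a" by (simp only: mult.commute)
      then have "Q a + (1 - Q a) * (real (snd x) + 1)^2 \<le> u (snd x) a / lam"
        by (simp only: pos_le_divide_eq[OF lam_pos])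
      then show "Q a * (real 1)^2 + (1 - Q a) * (real (snd x + 1))^2 \<le> u (snd x) a / lam"
        by (simp add: add.commute)
    qed
    also have "\<dots> = measure_pmf.expectation (traj p r pol k) (\<lambda>x. measure_pmf.expectation (pol (fst x) (snd x))
         (\<lambda>a. u (snd x) a) / lam)"
      by (rule exp_cong_fin) (rule exp_div_fin[OF fin_pol[OF v]])
    also have "\<dots> = ck pol k / lam"
      unfolding ck_eq by (rule exp_div_fin[OF f1])
    finally show ?thesis .
  qed
  have "ek pol (Suc k) \<le> measure_pmf.expectation (traj p r pol (Suc k)) (\<lambda>x. Bq * (real (snd x))^2)"
    unfolding ek_def
  proof (rule exp_mono_fin[OF f2])
    fix x assume "x \<in> set_pmf (traj p r pol (Suc k))"
    then have "1 \<le> snd x" using traj_props[OF v] by blast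
    then show "hh gs (snd x) \<le> Bq * (real (snd x))^2" by (rule hh_up)
  qed
  also have "\<dots> = Bq * measure_pmf.expectation (traj p r pol (Suc k)) (\<lambda>x. (real (snd x))^2)"
    by (rule exp_cmult_fin[OF f2])
  also have "\<dots> \<le> Bq * (ck pol k / lam)"
    using sq Bq_nn by (rule mult_left_mono)
  finally show ?thesis .
qed

lemma sum_lower:
  assumes v: "valid_policy N pol"
  shows "real T * gs - ek pol T \<le> (\<Sum>k<T. ck pol k)"
proof (induction T)
  case 0 then show ?case by (simp add: ek0)
next
  case (Suc T)
  then show ?case using ek_step[OF v, of T] by (simp add: algebra_simps)
qed

definition pstar where "pstar = stationary phi"

lemma pstar_valid: "valid_policy N pstar"
  unfolding valid_policy_def pstar_def stationary_def using phi_props by auto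

lemma ek_step_eq: "ek pstar (Suc k) = gs + ek pstar k - ck pstar k"
proof -
  have v: "valid_policy N pstar" by (rule pstar_valid)
  have f1: "finite (set_pmf (traj p r pstar k))" using traj_props[OF v] by blast
  have "ek pstar (Suc k) = measure_pmf.expectation (traj p r pstar k)
     (\<lambda>x. gs + hh gs (snd x) - u (snd x) (phi (snd x)))"
    unfolding ek_def step[OF v]
  proof (rule exp_cong_fin)
    fix x :: "(nat \<times> nat set) list \<times> nat"
    have e: "gs + hh gs (snd x) = u (snd x) (phi (snd x)) + (1 - Q (phi (snd x))) * hh gs (snd x + 1)"
      using phi_props by blast
    show "measure_pmf.expectation (pstar (fst x) (snd x)) (\<lambda>a. Q a * hh gs 1 + (1 - Q a) * hh gs (snd x + 1))
       = gs + hh gs (snd x) - u (snd x) (phi (snd x))"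
      unfolding pstar_def stationary_def exp_return gs_root using e by linarith
  qed
  also have "\<dots> = gs + ek pstar k - ck pstar k"
  proof -
    have ck': "ck pstar k = measure_pmf.expectation (traj p r pstar k) (\<lambda>x. u (snd x) (phi (snd x)))"
      unfolding ck_eq by (rule exp_cong_fin) (simp add: pstar_def stationary_def exp_return)
    show ?thesis unfolding ek_def ck' by (simp add: exp_diff_fin[OF f1] exp_add_fin[OF f1])
  qed
  finally show ?thesis .
qed

lemma sum_upper: "(\<Sum>k<T. ck pstar k) \<le> real T * gs - Hlow"
proof -
  have "(\<Sum>k<T. ck pstar k) = real T * gs - ek pstar T"
    by (induction T) (simp_all add: ek0 ek_step_eq algebra_simps)
  moreover have "Hlow \<le> ek pstar T"
  proof -
    have f: "finite (set_pmf (traj p r pstar T))" using traj_props[OF pstar_valid] by blast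
    have "measure_pmf.expectation (traj p r pstar T) (\<lambda>x. Hlow) \<le> ek pstar T"
      unfolding ek_def by (rule exp_mono_fin[OF f]) (rule hh_low)
    then show ?thesis by simp
  qed
  ultimately show ?thesis by simp
qed

end

lemma limsup_upper:
  fixes cs :: "nat \<Rightarrow> real"
  assumes "\<And>T. (\<Sum>k<T. cs k) \<le> real T * g + B"
  shows "limsup (\<lambda>T. ereal ((\<Sum>k<T. cs k) / real T)) \<le> ereal g"
proof -
  have ev: "eventually (\<lambda>T. ereal ((\<Sum>k<T. cs k) / real T) \<le> ereal (g + B / real T)) sequentially"
    using eventually_ge_at_top[of "1::nat"]
  proof (rule eventually_mono)
    fix T :: nat assume T: "1 \<le> T"
    then have "(\<Sum>k<T. cs k) / real T \<le> (real T * g + B) / real T"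
      using assms[of T] by (intro divide_right_mono) auto
    also have "\<dots> = g + B / real T" using T by (simp add: field_simps)
    finally show "ereal ((\<Sum>k<T. cs k) / real T) \<le> ereal (g + B / real T)" by simp
  qed
  have lim: "(\<lambda>T. ereal (g + B / real T)) \<longlonglongrightarrow> ereal g"
    unfolding lim_ereal using tendsto_add[OF tendsto_const lim_const_over_n[of B]] by simp
  have "limsup (\<lambda>T. ereal ((\<Sum>k<T. cs k) / real T)) \<le> limsup (\<lambda>T. ereal (g + B / real T))"
    by (rule Limsup_mono[OF ev])
  also have "\<dots> = ereal g" by (rule lim_imp_Limsup[OF _ lim]) simp
  finally show ?thesis .
qed

lemma limsup_lower:
  fixes cs :: "nat \<Rightarrow> real"
  assumes nn: "\<And>k. 0 \<le> cs k" and kap: "0 \<le> \<kappa>"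
    and low: "\<And>T. real (Suc T) * g - \<kappa> * cs T \<le> (\<Sum>k<Suc T. cs k)"
  shows "ereal g \<le> limsup (\<lambda>T. ereal ((\<Sum>k<T. cs k) / real T))"
proof (rule ccontr)
  define S where "S T = (\<Sum>k<T. cs k)" for T
  assume "\<not> ereal g \<le> limsup (\<lambda>T. ereal ((\<Sum>k<T. cs k) / real T))"
  then have "limsup (\<lambda>T. ereal ((\<Sum>k<T. cs k) / real T)) < ereal g" by simp
  then obtain g1 where g1: "limsup (\<lambda>T. ereal ((\<Sum>k<T. cs k) / real T)) < ereal g1" "ereal g1 < ereal g"
    using ereal_dense2 by blast
  have "eventually (\<lambda>T. ereal ((\<Sum>k<T. cs k) / real T) < ereal g1) sequentially"
    by (rule Limsup_lessD[OF g1(1)])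
  then obtain T0 where T0: "\<And>T. T \<ge> T0 \<Longrightarrow> (\<Sum>k<T. cs k) / real T < g1"
    unfolding eventually_sequentially by auto
  define \<delta> where "\<delta> = g - g1"
  have dpos: "0 < \<delta>" using g1(2) by (simp add: \<delta>_def)
  define \<eta> where "\<eta> = \<delta> / (2 * (1 + \<kappa>))"
  have etapos: "0 < \<eta>" using dpos kap by (simp add: \<eta>_def)
  define T1 where "T1 = max (max T0 1) (nat \<lceil>2 * \<bar>g\<bar> / \<delta>\<rceil>)"
  have ST: "S T < g1 * real T" if "T \<ge> T0" "T \<ge> 1" for T
    using T0[OF that(1)] that(2) by (simp add: S_def pos_divide_less_eq mult.commute)
  have cT: "\<eta> * real T \<le> cs T" if "T \<ge> T1" for T
  proof -
    have T01: "T \<ge> T0" "T \<ge> 1" using that by (auto simp: T1_def)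
    have "real (Suc T) * g - \<kappa> * cs T \<le> S T + cs T" using low[of T] by (simp add: S_def)
    then have "(1 + \<kappa>) * cs T \<ge> real (Suc T) * g - S T" by (simp add: algebra_simps)
    moreover have "real (Suc T) * g - S T \<ge> real T * \<delta> + g"
      using ST[OF T01] by (simp add: \<delta>_def algebra_simps)
    moreover have "real T * \<delta> + g \<ge> real T * \<delta> / 2"
    proof -
      have "2 * \<bar>g\<bar> / \<delta> \<le> real T" using that by (simp add: T1_def; linarith)
      then have "2 * \<bar>g\<bar> \<le> real T * \<delta>" using dpos by (simp add: divide_le_eq)
      then show ?thesis by linarith
    qed
    ultimately have "(1 + \<kappa>) * cs T \<ge> real T * \<delta> / 2" by linarith
    then show ?thesis using kap unfolding \<eta>_def by (simp add: field_simps)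
  qed
  define T where "T = max T1 (nat \<lceil>2 * \<bar>g1\<bar> / \<eta>\<rceil> + 1)"
  have TT1: "T \<ge> T1" by (simp add: T_def)
  have T1': "T \<ge> T0" "T \<ge> 1" using TT1 by (auto simp: T1_def)
  have "real T * (\<eta> * real T) = (\<Sum>k\<in>{T..<2*T}. \<eta> * real T)" by simp
  also have "\<dots> \<le> (\<Sum>k\<in>{T..<2*T}. cs k)"
  proof (rule sum_mono)
    fix k assume "k \<in> {T..<2*T}"
    then have "k \<ge> T1" "real T \<le> real k" using TT1 by auto
    then show "\<eta> * real T \<le> cs k" using cT[of k] etapos by (meson mult_left_mono less_imp_le order_trans)
  qed
  also have "\<dots> \<le> S (2 * T)" unfolding S_def by (rule sum_mono2) (auto simp: nn)
  also have "\<dots> < g1 * real (2 * T)" using ST[of "2 * T"] T1' by simp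
  finally have "\<eta> * real T * real T < (2 * g1) * real T" by (simp add: algebra_simps)
  then have "\<eta> * real T < 2 * g1" using T1' by simp
  moreover have "2 * \<bar>g1\<bar> / \<eta> < real T" by (simp add: T_def; linarith)
  then have "2 * \<bar>g1\<bar> < \<eta> * real T" using etapos by (simp add: divide_less_eq mult.commute)
  ultimately show False by linarith
qed

lemma thresh_base:
  fixes \<phi> :: "nat \<Rightarrow> 'a"
  assumes "\<forall>s\<ge>1. \<phi> s = \<phi> 1"
  shows "\<exists>(K::nat) b \<theta>. K \<ge> 1 \<and> (\<forall>k\<in>{1..K}. \<exists>s\<ge>1. b k = \<phi> s) \<and>
       (\<forall>k. 1 \<le> k \<and> k < K \<longrightarrow> b k \<noteq> b (k + 1)) \<and>
       (\<forall>k. 1 \<le> k \<and> k < K \<longrightarrow> \<theta> k \<ge> 1 \<and> \<theta> k \<le> (1::nat)) \<and>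
       (\<forall>k. 1 \<le> k \<and> k + 1 < K \<longrightarrow> \<theta> k \<le> \<theta> (k + 1)) \<and>
       (\<forall>s\<ge>1. \<forall>k\<in>{1..K}. (k = 1 \<or> \<theta> (k - 1) \<le> s) \<and> (k = K \<or> s < \<theta> k) \<longrightarrow> \<phi> s = b k)"
  apply (rule exI[of _ "1::nat"])
  apply (rule exI[of _ "\<lambda>_::nat. \<phi> 1"])
  apply (rule exI[of _ "\<lambda>_::nat. (1::nat)"])
  apply (intro conjI)
       apply simp
      apply (intro ballI exI[of _ "1::nat"])
      apply simp
     apply simp
    apply simp
   apply simp
  apply (intro allI impI)
  subgoal for s using assms[rule_format, of s] by auto
  done

lemma thresh:
  fixes \<phi> :: "nat \<Rightarrow> 'a"
  assumes "1 \<le> M" "\<forall>s\<ge>M. \<phi> s = \<phi> M"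
  shows "\<exists>(K::nat) b \<theta>. K \<ge> 1 \<and> (\<forall>k\<in>{1..K}. \<exists>s\<ge>1. b k = \<phi> s) \<and>
       (\<forall>k. 1 \<le> k \<and> k < K \<longrightarrow> b k \<noteq> b (k + 1)) \<and>
       (\<forall>k. 1 \<le> k \<and> k < K \<longrightarrow> \<theta> k \<ge> 1 \<and> \<theta> k \<le> M) \<and>
       (\<forall>k. 1 \<le> k \<and> k + 1 < K \<longrightarrow> \<theta> k \<le> \<theta> (k + 1)) \<and>
       (\<forall>s\<ge>1. \<forall>k\<in>{1..K}. (k = 1 \<or> \<theta> (k - 1) \<le> s) \<and> (k = K \<or> s < \<theta> k) \<longrightarrow> \<phi> s = b k)"
  using assms
proof (induction M arbitrary: \<phi> rule: nat_induct_at_least)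
  case (base \<phi>)
  then show ?case by (rule thresh_base)
next
  case (Suc M \<phi>)
  define \<psi> where "\<psi> = \<phi>(M := \<phi> (Suc M))"
  have "\<forall>s\<ge>M. \<psi> s = \<psi> M"
  proof (intro allI impI)
    fix s assume "M \<le> s"
    then have "s = M \<or> Suc M \<le> s" by auto
    then show "\<psi> s = \<psi> M"
    proof
      assume "Suc M \<le> s" then have "\<phi> s = \<phi> (Suc M)" using Suc.prems by blast
      then show ?thesis using \<open>Suc M \<le> s\<close> by (simp add: \<psi>_def)
    qed simp
  qed
  from Suc.IH[OF this] show ?case
  proof (elim exE conjE)
  fix K :: nat and b and \<theta> :: "nat \<Rightarrow> nat" assume K: "K \<ge> 1" and bK: "\<forall>k\<in>{1..K}. \<exists>s\<ge>1. b k = \<psi> s"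
    and dist: "\<forall>k. 1 \<le> k \<and> k < K \<longrightarrow> b k \<noteq> b (k + 1)"
    and th: "\<forall>k. 1 \<le> k \<and> k < K \<longrightarrow> \<theta> k \<ge> 1 \<and> \<theta> k \<le> M"
    and mono: "\<forall>k. 1 \<le> k \<and> k + 1 < K \<longrightarrow> \<theta> k \<le> \<theta> (k + 1)"
    and asg: "\<forall>s\<ge>1. \<forall>k\<in>{1..K}. (k = 1 \<or> \<theta> (k - 1) \<le> s) \<and> (k = K \<or> s < \<theta> k) \<longrightarrow> \<psi> s = b k"
  show ?case
  proof (cases "\<phi> M = \<phi> (Suc M)")
    case True
    then have "\<psi> = \<phi>" unfolding \<psi>_def by (metis fun_upd_triv)
    have th': "\<forall>k. 1 \<le> k \<and> k < K \<longrightarrow> \<theta> k \<ge> 1 \<and> \<theta> k \<le> Suc M"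
    proof (intro allI impI)
      fix k assume "1 \<le> k \<and> k < K"
      then show "\<theta> k \<ge> 1 \<and> \<theta> k \<le> Suc M" using th[rule_format, of k] by simp
    qed
    show ?thesis
      apply (rule exI[of _ K], rule exI[of _ b], rule exI[of _ \<theta>])
      using K bK dist th' mono asg unfolding \<open>\<psi> = \<phi>\<close> by (intro conjI) assumption+
  next
    case False
    have bKM: "b K = \<phi> (Suc M)"
    proof -
      have "K = 1 \<or> \<theta> (K - 1) \<le> M"
      proof (cases "K = 1")
        case False
        then have "1 \<le> K - 1 \<and> K - 1 < K" using K by simp
        then show ?thesis using th[rule_format, of "K - 1"] by simp
      qed simp
      moreover have "1 \<le> M" "K \<in> {1..K}" using Suc.hyps K by auto
      ultimately have "\<psi> M = b K" using asg[rule_format, of M K] by blast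
      then show ?thesis by (simp add: \<psi>_def)
    qed
    define b' where "b' = b(K + 1 := \<phi> M, K + 2 := \<phi> (Suc M))"
    define \<theta>' where "\<theta>' = \<theta>(K := M, K + 1 := Suc M)"
    have c1: "1 \<le> K + 2" by simp
    have c2: "\<forall>k\<in>{1..K + 2}. \<exists>s\<ge>1. b' k = \<phi> s"
    proof
      fix k assume k: "k \<in> {1..K + 2}"
      show "\<exists>s\<ge>1. b' k = \<phi> s"
      proof (cases "k \<le> K")
        case True
        then have "k \<in> {1..K}" using k by auto
        then obtain s where s: "s \<ge> 1" "b k = \<psi> s" using bK by blast
        show ?thesis
        proof (cases "s = M")
          case True then show ?thesis using s \<open>k \<le> K\<close> by (intro exI[of _ "Suc M"]) (auto simp: b'_def \<psi>_def)
        next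
          case False then show ?thesis using s \<open>k \<le> K\<close> by (intro exI[of _ s]) (auto simp: b'_def \<psi>_def)
        qed
      next
        case False
        then have "k = K + 1 \<or> k = K + 2" using k by auto
        then show ?thesis using Suc.hyps by (auto simp: b'_def)
      qed
    qed
    have c3: "\<forall>k. 1 \<le> k \<and> k < K + 2 \<longrightarrow> b' k \<noteq> b' (k + 1)"
    proof (intro allI impI)
      fix k assume k: "1 \<le> k \<and> k < K + 2"
      then have "k < K \<or> k = K \<or> k = K + 1" by auto
      then show "b' k \<noteq> b' (k + 1)"
      proof (elim disjE)
        assume "k < K" then show ?thesis using dist[rule_format, of k] k by (simp add: b'_def)
      next
        assume "k = K" then show ?thesis using bKM False by (simp add: b'_def)
      next
        assume "k = K + 1" then show ?thesis using False by (simp add: b'_def)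
      qed
    qed
    have c4: "\<forall>k. 1 \<le> k \<and> k < K + 2 \<longrightarrow> 1 \<le> \<theta>' k \<and> \<theta>' k \<le> Suc M"
    proof (intro allI impI)
      fix k assume k: "1 \<le> k \<and> k < K + 2"
      then have "k < K \<or> k = K \<or> k = K + 1" by auto
      then show "1 \<le> \<theta>' k \<and> \<theta>' k \<le> Suc M"
      proof (elim disjE)
        assume "k < K" then show ?thesis using th[rule_format, of k] k by (simp add: \<theta>'_def)
      qed (use Suc.hyps in \<open>auto simp: \<theta>'_def\<close>)
    qed
    have c5: "\<forall>k. 1 \<le> k \<and> k + 1 < K + 2 \<longrightarrow> \<theta>' k \<le> \<theta>' (k + 1)"
    proof (intro allI impI)
      fix k assume k: "1 \<le> k \<and> k + 1 < K + 2"
      then have "k + 1 < K \<or> k + 1 = K \<or> k = K" by auto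
      then show "\<theta>' k \<le> \<theta>' (k + 1)"
      proof (elim disjE)
        assume "k + 1 < K" then show ?thesis using mono[rule_format, of k] k by (simp add: \<theta>'_def)
      next
        assume a: "k + 1 = K"
        then have "\<theta> k \<le> M" using th[rule_format, of k] k by simp
        then show ?thesis using a by (simp add: \<theta>'_def)
      next
        assume "k = K" then show ?thesis by (simp add: \<theta>'_def)
      qed
    qed
    have c6: "\<forall>s\<ge>1. \<forall>k\<in>{1..K + 2}. (k = 1 \<or> \<theta>' (k - 1) \<le> s) \<and> (k = K + 2 \<or> s < \<theta>' k) \<longrightarrow> \<phi> s = b' k"
    proof (intro allI impI ballI)
      fix s k assume s: "1 \<le> s" and k: "k \<in> {1..K + 2}"
        and cnd: "(k = 1 \<or> \<theta>' (k - 1) \<le> s) \<and> (k = K + 2 \<or> s < \<theta>' k)"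
      have "k < K \<or> k = K \<or> k = K + 1 \<or> k = K + 2" using k by auto
      then show "\<phi> s = b' k"
      proof (elim disjE)
        assume kK: "k < K"
        have e1: "\<theta>' k = \<theta> k" "\<theta>' (k - 1) = \<theta> (k - 1)" using kK by (auto simp: \<theta>'_def)
        have c2: "(k = 1 \<or> \<theta> (k - 1) \<le> s) \<and> s < \<theta> k" using cnd kK unfolding e1 by auto
        have kin: "k \<in> {1..K}" using k kK by auto
        have "\<psi> s = b k" using asg[rule_format, OF s kin] c2 kK by blast
        moreover have "s < M" using c2 th[rule_format, of k] kK k by auto
        ultimately show ?thesis using kK by (simp add: \<psi>_def b'_def)
      next
        assume kK: "k = K"
        have e1: "\<theta>' K = M" "\<theta>' (K - 1) = \<theta> (K - 1)" using K by (auto simp: \<theta>'_def)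
        have c2: "(K = 1 \<or> \<theta> (K - 1) \<le> s) \<and> s < M" using cnd unfolding kK e1 by auto
        have kin: "K \<in> {1..K}" using K by auto
        have "\<psi> s = b K" using asg[rule_format, OF s kin] c2 by blast
        then show ?thesis using kK c2 by (simp add: \<psi>_def b'_def)
      next
        assume kK: "k = K + 1"
        then have "M \<le> s" "s < Suc M" using cnd K by (auto simp: \<theta>'_def)
        then have "s = M" by simp
        then show ?thesis using kK by (simp add: b'_def)
      next
        assume kK: "k = K + 2"
        then have "Suc M \<le> s" using cnd by (auto simp: \<theta>'_def)
        then have "\<phi> s = \<phi> (Suc M)" using Suc.prems by blast
        then show ?thesis using kK by (simp add: b'_def)
      qed
    qed
    show ?thesis
      apply (rule exI[of _ "K + 2"], rule exI[of _ b'], rule exI[of _ \<theta>'])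
      using c1 c2 c3 c4 c5 c6 by (intro conjI) assumption+
  qed
qed
qed

context mdp begin

lemma avg_pstar: "avg_cost p c r \<beta> \<epsilon> pstar \<le> ereal gs"
  unfolding avg_cost_def
  by (rule limsup_upper[of _ gs "- Hlow"]) (use sum_upper in simp)

lemma avg_lower: assumes v: "valid_policy N pol" shows "ereal gs \<le> avg_cost p c r \<beta> \<epsilon> pol"
  unfolding avg_cost_def
proof (rule limsup_lower[of _ "Bq / lam"])
  show "\<And>k. 0 \<le> ck pol k" by (rule exp_cost_nonneg[OF v])
  show "0 \<le> Bq / lam" using Bq_nn lam_pos by simp
  fix T
  have "real (Suc T) * gs - ek pol (Suc T) \<le> (\<Sum>k<Suc T. ck pol k)" by (rule sum_lower[OF v])
  moreover have "ek pol (Suc T) \<le> Bq / lam * ck pol T" using ek_up[OF v, of T] by simp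
  ultimately show "real (Suc T) * gs - Bq / lam * ck pol T \<le> (\<Sum>k<Suc T. ck pol k)" by linarith
qed

lemma main:
  "\<exists>\<phi> :: nat \<Rightarrow> nat set. optimal N p c r \<beta> \<epsilon> (stationary \<phi>) \<and>
    (\<exists>(K::nat) (b :: nat \<Rightarrow> nat set) (\<theta> :: nat \<Rightarrow> nat).
       K \<ge> 1 \<and>
       (\<forall>k\<in>{1..K}. b k \<subseteq> {1..N}) \<and>
       (\<forall>k. 1 \<le> k \<and> k < K \<longrightarrow> b k \<noteq> b (k + 1)) \<and>
       (\<forall>k. 1 \<le> k \<and> k < K \<longrightarrow> \<theta> k \<ge> 1) \<and>
       (\<forall>k. 1 \<le> k \<and> k + 1 < K \<longrightarrow> \<theta> k \<le> \<theta> (k + 1)) \<and>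
       (\<forall>s\<ge>1. \<forall>k\<in>{1..K}. (k = 1 \<or> \<theta> (k - 1) \<le> s) \<and> (k = K \<or> s < \<theta> k) \<longrightarrow> \<phi> s = b k))"
proof (rule exI[of _ phi], rule conjI)
  show "optimal N p c r \<beta> \<epsilon> (stationary phi)"
    unfolding optimal_def pstar_def[symmetric]
  proof (intro conjI allI impI)
    show "valid_policy N pstar" by (rule pstar_valid)
    fix pol' assume "valid_policy N pol'"
    then show "avg_cost p c r \<beta> \<epsilon> pstar \<le> avg_cost p c r \<beta> \<epsilon> pol'"
      using avg_pstar avg_lower by (meson order_trans)
  qed
next
  have M1: "1 \<le> M" using M_ge by simp
  have "\<forall>s\<ge>M. phi s = phi M" by (simp add: phi_def)
  from thresh[OF M1 this]
  show "\<exists>(K::nat) (b :: nat \<Rightarrow> nat set) (\<theta> :: nat \<Rightarrow> nat).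
       K \<ge> 1 \<and>
       (\<forall>k\<in>{1..K}. b k \<subseteq> {1..N}) \<and>
       (\<forall>k. 1 \<le> k \<and> k < K \<longrightarrow> b k \<noteq> b (k + 1)) \<and>
       (\<forall>k. 1 \<le> k \<and> k < K \<longrightarrow> \<theta> k \<ge> 1) \<and>
       (\<forall>k. 1 \<le> k \<and> k + 1 < K \<longrightarrow> \<theta> k \<le> \<theta> (k + 1)) \<and>
       (\<forall>s\<ge>1. \<forall>k\<in>{1..K}. (k = 1 \<or> \<theta> (k - 1) \<le> s) \<and> (k = K \<or> s < \<theta> k) \<longrightarrow> phi s = b k)"
  proof (elim exE conjE)
    fix K :: nat and b and \<theta> :: "nat \<Rightarrow> nat"
    assume K: "K \<ge> 1" and bK: "\<forall>k\<in>{1..K}. \<exists>s\<ge>1. b k = phi s"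
      and dist: "\<forall>k. 1 \<le> k \<and> k < K \<longrightarrow> b k \<noteq> b (k + 1)"
      and th: "\<forall>k. 1 \<le> k \<and> k < K \<longrightarrow> \<theta> k \<ge> 1 \<and> \<theta> k \<le> M"
      and mono: "\<forall>k. 1 \<le> k \<and> k + 1 < K \<longrightarrow> \<theta> k \<le> \<theta> (k + 1)"
      and asg: "\<forall>s\<ge>1. \<forall>k\<in>{1..K}. (k = 1 \<or> \<theta> (k - 1) \<le> s) \<and> (k = K \<or> s < \<theta> k) \<longrightarrow> phi s = b k"
    have bA: "\<forall>k\<in>{1..K}. b k \<subseteq> {1..N}"
    proof
      fix k assume "k \<in> {1..K}"
      then obtain s where "b k = phi s" using bK by blast
      then show "b k \<subseteq> {1..N}" using phi_props[of s] by simp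
    qed
    have th1: "\<forall>k. 1 \<le> k \<and> k < K \<longrightarrow> \<theta> k \<ge> 1" using th by blast
    show ?thesis
      apply (rule exI[of _ K], rule exI[of _ b], rule exI[of _ \<theta>])
      using K bA dist th1 mono asg by (intro conjI) assumption+
  qed
qed

end

theorem theorem1:
  fixes N :: nat and p c r :: "nat \<Rightarrow> real" and \<beta> \<epsilon> :: real
  assumes "N \<ge> 1"
    and "\<forall>n\<in>{1..N}. 0 < p n \<and> p n \<le> 1"
    and "\<forall>n\<in>{1..N}. c n \<ge> 0"
    and "\<forall>n\<in>{1..N}. 0 < r n \<and> r n \<le> 1"
    and "0 < \<beta>" and "\<beta> < 1" and "\<epsilon> > 0"
  shows "\<exists>\<phi> :: nat \<Rightarrow> nat set. optimal N p c r \<beta> \<epsilon> (stationary \<phi>) \<and>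
    (\<exists>(K::nat) (b :: nat \<Rightarrow> nat set) (\<theta> :: nat \<Rightarrow> nat).
       K \<ge> 1 \<and>
       (\<forall>k\<in>{1..K}. b k \<subseteq> {1..N}) \<and>
       (\<forall>k. 1 \<le> k \<and> k < K \<longrightarrow> b k \<noteq> b (k + 1)) \<and>
       (\<forall>k. 1 \<le> k \<and> k < K \<longrightarrow> \<theta> k \<ge> 1) \<and>
       (\<forall>k. 1 \<le> k \<and> k + 1 < K \<longrightarrow> \<theta> k \<le> \<theta> (k + 1)) \<and>
       (\<forall>s\<ge>1. \<forall>k\<in>{1..K}. (k = 1 \<or> \<theta> (k - 1) \<le> s) \<and> (k = K \<or> s < \<theta> k) \<longrightarrow> \<phi> s = b k))"
proof -
  interpret mdp N p c r \<beta> \<epsilon> using assms by unfold_locales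
  show ?thesis by (rule main)
qed

end
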